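(* Let $\pi^{\mathrm{cen},*}\in S^{\mathrm{cen}}$. (a) For any $\varepsilon\ge0$, any optimizer $(\pi^*_1,\dots,\pi^*_N,\pi^*_c)$ of the CAL problem with parameter $\varepsilon$, and any $i$, $V_{N^{-1}\mathbf{1}}(\pi^{\mathrm{cen},*})\le V_{N^{-1}\mathbf{1}}(\pi^*_i)$. (b) For any $j\in\{1,\dots,N\}$ and $\pi^{\mathrm{dec},*}_j\in S^{\mathrm{dec}}_j$, if $V_{N^{-1}\mathbf{1}}(\pi^{\mathrm{cen},*})<V_{N^{-1}\mathbf{1}}(\pi^{\mathrm{dec},*}_j)$, then there exists $\varepsilon>0$ such that $V_{N^{-1}\mathbf{1}}(\pi^*_j)\le V_{N^{-1}\mathbf{1}}(\pi^{\mathrm{dec},*}_j)$ for every optimizer $(\pi^*_1,\dots,\pi^*_N,\pi^*_c)$ of the CAL problem with parameter $\varepsilon$.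
   Context: Let $\mathcal{S},\mathcal{A}$ be finite sets, $\gamma\in(0,1)$, $\rho$ a probability distribution on $\mathcal{S}$, and for $i=1,\dots,N$ environment $i$ is the Markov decision process $(\mathcal{S},\mathcal{A},P^i,\gamma,\rho)$. $\Pi$ is the set of stationary policies $\pi:\mathcal{S}\to\Delta(\mathcal{A})$ ($\pi(s,a)$ = probability of $a$ at $s$). $\mu^\pi_i(s,a)=\sum_{t\ge0}\gamma^t\mathbb{P}^{\pi,i}_\rho[s_t=s,a_t=a]$ is the discounted occupation measure (trajectory law: $s_0\sim\rho$, $a_t\sim\pi(s_t,\cdot)$, $s_{t+1}\sim P^i(\cdot\mid s_t,a_t)$). Expert policies $\pi^{E_i}\in\Pi$ and a cost basis matrix $\Phi\in\mathbb{R}^{|\mathcal{S}||\mathcal{A}|\times n_c}$ with columns of sup-norm at most $1$ are given. For $\beta$ in the probability simplex of $\mathbb{R}^N$, $V_\beta(\pi)=\sum_{i=1}^N\beta_i\|\Phi^\top\mu^\pi_i-\Phi^\top\mu^{\pi^{E_i}}_i\|_1$; $N^{-1}\mathbf{1}$ is the vector with all entries $1/N$. $S^{\mathrm{dec}}_j=\arg\min_{\pi\in\Pi}\|\Phi^\top\mu^\pi_j-\Phi^\top\mu^{\pi^{E_j}}_j\|_1$ and $S^{\mathrm{cen}}=\arg\min_{\pi\in\Pi}\sum_{i=1}^N\|\Phi^\top\mu^\pi_i-\Phi^\top\mu^{\pi^{E_i}}_i\|_1$. The CAL problem with parameter $\varepsilon\ge0$ is: minimize $\sum_{i=1}^N\|\Phi^\top\mu^{\pi_i}_i-\Phi^\top\mu^{\pi^{E_i}}_i\|_1$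 over $(\pi_1,\dots,\pi_N,\pi_c)\in\Pi^{N+1}$ subject to $\max_{(s,a)}|\pi_i(s,a)-\pi_c(s,a)|\le\varepsilon$ for all $i$. *)

theory Defs
  imports "HOL-Analysis.Analysis"
begin

text \<open>Environments are indexed by i in {1..N}; P i s a s' is the transition probability.\<close>

definition policies :: "('s::finite \<Rightarrow> 'a::finite \<Rightarrow> real) set" where
  "policies = {\<pi>. (\<forall>s a. 0 \<le> \<pi> s a) \<and> (\<forall>s. (\<Sum>a\<in>UNIV. \<pi> s a) = 1)}"

text \<open>Marginal law of s_t under policy pi in an MDP with kernel P and initial distribution rho:
  P[s_t = s]. Then P[s_t = s, a_t = a] = state_dist t s * pi s a.\<close>
fun state_dist :: "('s::finite \<Rightarrow> 'a::finite \<Rightarrow> 's \<Rightarrow> real) \<Rightarrow> ('s \<Rightarrow> real)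
      \<Rightarrow> ('s \<Rightarrow> 'a \<Rightarrow> real) \<Rightarrow> nat \<Rightarrow> 's \<Rightarrow> real" where
  "state_dist P \<rho> \<pi> 0 s = \<rho> s"
| "state_dist P \<rho> \<pi> (Suc t) s' =
     (\<Sum>s\<in>UNIV. \<Sum>a\<in>UNIV. state_dist P \<rho> \<pi> t s * \<pi> s a * P s a s')"

definition occ :: "real \<Rightarrow> ('s::finite \<Rightarrow> 'a::finite \<Rightarrow> 's \<Rightarrow> real) \<Rightarrow> ('s \<Rightarrow> real)
      \<Rightarrow> ('s \<Rightarrow> 'a \<Rightarrow> real) \<Rightarrow> 's \<times> 'a \<Rightarrow> real" where
  "occ \<gamma> P \<rho> \<pi> sa = (\<Sum>t. \<gamma> ^ t * (state_dist P \<rho> \<pi> t (fst sa) * \<pi> (fst sa) (snd sa)))"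

definition mismatch :: "('s::finite \<times> 'a::finite \<Rightarrow> 'c::finite \<Rightarrow> real) \<Rightarrow> real
      \<Rightarrow> ('s \<Rightarrow> 'a \<Rightarrow> 's \<Rightarrow> real) \<Rightarrow> ('s \<Rightarrow> real)
      \<Rightarrow> ('s \<Rightarrow> 'a \<Rightarrow> real) \<Rightarrow> ('s \<Rightarrow> 'a \<Rightarrow> real) \<Rightarrow> real" where
  "mismatch \<Phi> \<gamma> P \<rho> \<pi>E \<pi> =
     (\<Sum>k\<in>UNIV. \<bar>(\<Sum>sa\<in>UNIV. \<Phi> sa k * occ \<gamma> P \<rho> \<pi> sa)
                 - (\<Sum>sa\<in>UNIV. \<Phi> sa k * occ \<gamma> P \<rho> \<pi>E sa)\<bar>)"

definition V :: "nat \<Rightarrow> (nat \<Rightarrow> real) \<Rightarrow> ('s::finite \<times> 'a::finite \<Rightarrow> 'c::finite \<Rightarrow> real) \<Rightarrow> real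
      \<Rightarrow> (nat \<Rightarrow> 's \<Rightarrow> 'a \<Rightarrow> 's \<Rightarrow> real) \<Rightarrow> ('s \<Rightarrow> real)
      \<Rightarrow> (nat \<Rightarrow> 's \<Rightarrow> 'a \<Rightarrow> real) \<Rightarrow> ('s \<Rightarrow> 'a \<Rightarrow> real) \<Rightarrow> real" where
  "V N \<beta> \<Phi> \<gamma> P \<rho> \<pi>E \<pi> = (\<Sum>i=1..N. \<beta> i * mismatch \<Phi> \<gamma> (P i) \<rho> (\<pi>E i) \<pi>)"

definition S_dec :: "('s::finite \<times> 'a::finite \<Rightarrow> 'c::finite \<Rightarrow> real) \<Rightarrow> real
      \<Rightarrow> (nat \<Rightarrow> 's \<Rightarrow> 'a \<Rightarrow> 's \<Rightarrow> real) \<Rightarrow> ('s \<Rightarrow> real)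
      \<Rightarrow> (nat \<Rightarrow> 's \<Rightarrow> 'a \<Rightarrow> real) \<Rightarrow> nat \<Rightarrow> ('s \<Rightarrow> 'a \<Rightarrow> real) set" where
  "S_dec \<Phi> \<gamma> P \<rho> \<pi>E j = {\<pi> \<in> policies. \<forall>\<pi>' \<in> policies.
      mismatch \<Phi> \<gamma> (P j) \<rho> (\<pi>E j) \<pi> \<le> mismatch \<Phi> \<gamma> (P j) \<rho> (\<pi>E j) \<pi>'}"

definition S_cen :: "nat \<Rightarrow> ('s::finite \<times> 'a::finite \<Rightarrow> 'c::finite \<Rightarrow> real) \<Rightarrow> real
      \<Rightarrow> (nat \<Rightarrow> 's \<Rightarrow> 'a \<Rightarrow> 's \<Rightarrow> real) \<Rightarrow> ('s \<Rightarrow> real)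
      \<Rightarrow> (nat \<Rightarrow> 's \<Rightarrow> 'a \<Rightarrow> real) \<Rightarrow> ('s \<Rightarrow> 'a \<Rightarrow> real) set" where
  "S_cen N \<Phi> \<gamma> P \<rho> \<pi>E = {\<pi> \<in> policies. \<forall>\<pi>' \<in> policies.
      (\<Sum>i=1..N. mismatch \<Phi> \<gamma> (P i) \<rho> (\<pi>E i) \<pi>) \<le> (\<Sum>i=1..N. mismatch \<Phi> \<gamma> (P i) \<rho> (\<pi>E i) \<pi>')}"

text \<open>Feasible points of the CAL problem: (pi_1..pi_N) given as a function on {1..N}
  (values outside {1..N} are irrelevant), plus the central policy pi_c.\<close>
definition CAL_feasible :: "nat \<Rightarrow> real \<Rightarrow> (nat \<Rightarrow> 's::finite \<Rightarrow> 'a::finite \<Rightarrow> real)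
      \<Rightarrow> ('s \<Rightarrow> 'a \<Rightarrow> real) \<Rightarrow> bool" where
  "CAL_feasible N \<epsilon> \<pi>s \<pi>c \<longleftrightarrow> (\<forall>i\<in>{1..N}. \<pi>s i \<in> policies) \<and> \<pi>c \<in> policies \<and>
      (\<forall>i\<in>{1..N}. \<forall>s a. \<bar>\<pi>s i s a - \<pi>c s a\<bar> \<le> \<epsilon>)"

definition CAL_objective :: "nat \<Rightarrow> ('s::finite \<times> 'a::finite \<Rightarrow> 'c::finite \<Rightarrow> real) \<Rightarrow> real
      \<Rightarrow> (nat \<Rightarrow> 's \<Rightarrow> 'a \<Rightarrow> 's \<Rightarrow> real) \<Rightarrow> ('s \<Rightarrow> real)
      \<Rightarrow> (nat \<Rightarrow> 's \<Rightarrow> 'a \<Rightarrow> real) \<Rightarrow> (nat \<Rightarrow> 's \<Rightarrow> 'a \<Rightarrow> real) \<Rightarrow> real" where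
  "CAL_objective N \<Phi> \<gamma> P \<rho> \<pi>E \<pi>s = (\<Sum>i=1..N. mismatch \<Phi> \<gamma> (P i) \<rho> (\<pi>E i) (\<pi>s i))"

definition CAL_optimizer :: "nat \<Rightarrow> ('s::finite \<times> 'a::finite \<Rightarrow> 'c::finite \<Rightarrow> real) \<Rightarrow> real
      \<Rightarrow> (nat \<Rightarrow> 's \<Rightarrow> 'a \<Rightarrow> 's \<Rightarrow> real) \<Rightarrow> ('s \<Rightarrow> real)
      \<Rightarrow> (nat \<Rightarrow> 's \<Rightarrow> 'a \<Rightarrow> real) \<Rightarrow> real
      \<Rightarrow> (nat \<Rightarrow> 's \<Rightarrow> 'a \<Rightarrow> real) \<Rightarrow> ('s \<Rightarrow> 'a \<Rightarrow> real) \<Rightarrow> bool" where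
  "CAL_optimizer N \<Phi> \<gamma> P \<rho> \<pi>E \<epsilon> \<pi>s \<pi>c \<longleftrightarrow> CAL_feasible N \<epsilon> \<pi>s \<pi>c \<and>
     (\<forall>\<pi>s' \<pi>c'. CAL_feasible N \<epsilon> \<pi>s' \<pi>c' \<longrightarrow>
        CAL_objective N \<Phi> \<gamma> P \<rho> \<pi>E \<pi>s \<le> CAL_objective N \<Phi> \<gamma> P \<rho> \<pi>E \<pi>s')"

end

theory Submission
  imports Defs
begin

lemma swap3: "(\<Sum>x\<in>A. \<Sum>y\<in>B. \<Sum>z\<in>C. f x y z) = (\<Sum>y\<in>B. \<Sum>z\<in>C. \<Sum>x\<in>A. (f x y z::real))"
proof -
  have "(\<Sum>x\<in>A. \<Sum>y\<in>B. \<Sum>z\<in>C. f x y z) = (\<Sum>y\<in>B. \<Sum>x\<in>A. \<Sum>z\<in>C. f x y z)"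
    by (rule sum.swap)
  also have "\<dots> = (\<Sum>y\<in>B. \<Sum>z\<in>C. \<Sum>x\<in>A. f x y z)"
    by (rule sum.cong[OF refl], rule sum.swap)
  finally show ?thesis .
qed

lemma sd_nonneg:
  assumes "\<forall>s a s'. 0 \<le> P s a s'" "\<forall>s. 0 \<le> \<rho> s" "\<pi> \<in> policies"
  shows "0 \<le> state_dist P \<rho> \<pi> t s"
  using assms
  by (induction t arbitrary: s) (auto simp: policies_def intro!: sum_nonneg mult_nonneg_nonneg)

lemma sd_sum:
  fixes P :: "'s::finite \<Rightarrow> 'a::finite \<Rightarrow> 's \<Rightarrow> real"
  assumes "\<forall>s a. (\<Sum>s'\<in>UNIV. P s a s') = 1" "(\<Sum>s\<in>UNIV. \<rho> s) = 1" "\<pi> \<in> policies"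
  shows "(\<Sum>s\<in>UNIV. state_dist P \<rho> \<pi> t s) = 1"
proof (induction t)
  case 0 then show ?case using assms by simp
next
  case (Suc t)
  have "(\<Sum>s'\<in>UNIV. state_dist P \<rho> \<pi> (Suc t) s')
      = (\<Sum>s\<in>UNIV. \<Sum>a\<in>UNIV. state_dist P \<rho> \<pi> t s * \<pi> s a * (\<Sum>s'\<in>UNIV. P s a s'))"
    by (simp only: state_dist.simps, subst swap3, simp add: sum_distrib_left)
  also have "\<dots> = (\<Sum>s\<in>UNIV. state_dist P \<rho> \<pi> t s * (\<Sum>a\<in>UNIV. \<pi> s a))"
    using assms(1) by (simp add: sum_distrib_left)
  also have "\<dots> = 1" using assms(3) Suc by (simp add: policies_def)
  finally show ?case .
qed

lemma sd_le1:
  fixes P :: "'s::finite \<Rightarrow> 'a::finite \<Rightarrow> 's \<Rightarrow> real"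
  assumes "\<forall>s a s'. 0 \<le> P s a s'" "\<forall>s. 0 \<le> \<rho> s"
    "\<forall>s a. (\<Sum>s'\<in>UNIV. P s a s') = 1" "(\<Sum>s\<in>UNIV. \<rho> s) = 1" "\<pi> \<in> policies"
  shows "state_dist P \<rho> \<pi> t s \<le> 1"
proof -
  have "state_dist P \<rho> \<pi> t s \<le> (\<Sum>s\<in>UNIV. state_dist P \<rho> \<pi> t s)"
    by (rule member_le_sum) (use sd_nonneg assms in auto)
  then show ?thesis using sd_sum[OF assms(3,4,5)] by simp
qed

lemma pol_le1:
  assumes "\<pi> \<in> policies" shows "\<pi> s a \<le> (1::real)"
proof -
  have "\<pi> s a \<le> (\<Sum>a\<in>UNIV. \<pi> s a)"
    by (rule member_le_sum) (use assms in \<open>auto simp: policies_def\<close>)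
  then show ?thesis using assms by (simp add: policies_def)
qed

lemma e_bound:
  fixes P :: "'s::finite \<Rightarrow> 'a::finite \<Rightarrow> 's \<Rightarrow> real"
  assumes "\<forall>s a s'. 0 \<le> P s a s'" "\<forall>s. 0 \<le> \<rho> s"
    "\<forall>s a. (\<Sum>s'\<in>UNIV. P s a s') = 1" "(\<Sum>s\<in>UNIV. \<rho> s) = 1" "\<pi> \<in> policies" "\<pi>' \<in> policies"
    and d: "\<forall>s a. \<bar>\<pi> s a - \<pi>' s a\<bar> \<le> \<delta>"
  shows "(\<Sum>s\<in>UNIV. \<bar>state_dist P \<rho> \<pi> t s - state_dist P \<rho> \<pi>' t s\<bar>) \<le> real t * CARD('a) * \<delta>"
proof (induction t)
  case 0 then show ?case by simp
next
  case (Suc t)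
  define d1 where "d1 = state_dist P \<rho> \<pi> t"
  define d2 where "d2 = state_dist P \<rho> \<pi>' t"
  have d2nn: "0 \<le> d2 s" for s unfolding d2_def using sd_nonneg assms by blast
  have "(\<Sum>s'\<in>UNIV. \<bar>state_dist P \<rho> \<pi> (Suc t) s' - state_dist P \<rho> \<pi>' (Suc t) s'\<bar>)
      = (\<Sum>s'\<in>UNIV. \<bar>\<Sum>s\<in>UNIV. \<Sum>a\<in>UNIV. (d1 s * \<pi> s a - d2 s * \<pi>' s a) * P s a s'\<bar>)"
    by (simp add: d1_def d2_def sum_subtractf[symmetric] algebra_simps)
  also have "\<dots> \<le> (\<Sum>s'\<in>UNIV. \<Sum>s\<in>UNIV. \<Sum>a\<in>UNIV. \<bar>d1 s * \<pi> s a - d2 s * \<pi>' s a\<bar> * P s a s')"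
  proof (rule sum_mono)
    fix s'
    have "\<bar>\<Sum>s\<in>UNIV. \<Sum>a\<in>UNIV. (d1 s * \<pi> s a - d2 s * \<pi>' s a) * P s a s'\<bar>
        \<le> (\<Sum>s\<in>UNIV. \<bar>\<Sum>a\<in>UNIV. (d1 s * \<pi> s a - d2 s * \<pi>' s a) * P s a s'\<bar>)"
      by (rule sum_abs)
    also have "\<dots> \<le> (\<Sum>s\<in>UNIV. \<Sum>a\<in>UNIV. \<bar>(d1 s * \<pi> s a - d2 s * \<pi>' s a) * P s a s'\<bar>)"
      by (intro sum_mono sum_abs)
    also have "\<dots> = (\<Sum>s\<in>UNIV. \<Sum>a\<in>UNIV. \<bar>d1 s * \<pi> s a - d2 s * \<pi>' s a\<bar> * P s a s')"
      using assms(1) by (simp add: abs_mult)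
    finally show "\<bar>\<Sum>s\<in>UNIV. \<Sum>a\<in>UNIV. (d1 s * \<pi> s a - d2 s * \<pi>' s a) * P s a s'\<bar>
        \<le> (\<Sum>s\<in>UNIV. \<Sum>a\<in>UNIV. \<bar>d1 s * \<pi> s a - d2 s * \<pi>' s a\<bar> * P s a s')" .
  qed
  also have "\<dots> = (\<Sum>s\<in>UNIV. \<Sum>a\<in>UNIV. \<bar>d1 s * \<pi> s a - d2 s * \<pi>' s a\<bar> * (\<Sum>s'\<in>UNIV. P s a s'))"
    by (subst swap3) (simp add: sum_distrib_left)
  also have "\<dots> = (\<Sum>s\<in>UNIV. \<Sum>a\<in>UNIV. \<bar>d1 s * \<pi> s a - d2 s * \<pi>' s a\<bar>)"
    using assms(3) by simp
  also have "\<dots> \<le> (\<Sum>s\<in>UNIV. \<Sum>a\<in>UNIV. \<bar>d1 s - d2 s\<bar> * \<pi> s a + d2 s * \<delta>)"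
  proof (intro sum_mono)
    fix s a
    have "d1 s * \<pi> s a - d2 s * \<pi>' s a = (d1 s - d2 s) * \<pi> s a + d2 s * (\<pi> s a - \<pi>' s a)"
      by (simp add: algebra_simps)
    also have "\<bar>\<dots>\<bar> \<le> \<bar>d1 s - d2 s\<bar> * \<pi> s a + d2 s * \<delta>"
    proof -
      have "\<bar>(d1 s - d2 s) * \<pi> s a\<bar> = \<bar>d1 s - d2 s\<bar> * \<pi> s a"
        using assms(5) by (simp add: abs_mult policies_def)
      moreover have "\<bar>d2 s * (\<pi> s a - \<pi>' s a)\<bar> \<le> d2 s * \<delta>"
        using d d2nn[of s] by (simp add: abs_mult mult_left_mono)
      ultimately show ?thesis by (smt (verit) abs_triangle_ineq)
    qed
    finally show "\<bar>d1 s * \<pi> s a - d2 s * \<pi>' s a\<bar> \<le> \<bar>d1 s - d2 s\<bar> * \<pi> s a + d2 s * \<delta>" .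
  qed
  also have "\<dots> = (\<Sum>s\<in>UNIV. \<bar>d1 s - d2 s\<bar>) + (\<Sum>s\<in>UNIV. d2 s) * CARD('a) * \<delta>"
  proof -
    have "(\<Sum>a\<in>UNIV. \<bar>d1 s - d2 s\<bar> * \<pi> s a) = \<bar>d1 s - d2 s\<bar>" for s
      using assms(5) by (simp add: sum_distrib_left[symmetric] policies_def)
    then show ?thesis by (simp add: sum.distrib sum_distrib_right sum_distrib_left[symmetric] mult.commute mult.left_commute)
  qed
  also have "\<dots> \<le> real t * CARD('a) * \<delta> + CARD('a) * \<delta>"
    using Suc sd_sum[OF assms(3,4,6)] by (simp add: d1_def d2_def)
  finally show ?case by (simp add: algebra_simps)
qed

lemma K_summable:
  assumes "0 \<le> \<gamma>" "\<gamma> < (1::real)"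
  shows "summable (\<lambda>n. real (Suc n) * \<gamma> ^ n)"
proof -
  have "summable (\<lambda>n. diffs (\<lambda>_. 1::real) n * \<gamma> ^ n)"
    by (rule termdiff_converges[where K=1]) (use assms in \<open>auto intro: summable_geometric\<close>)
  then show ?thesis by (simp add: diffs_def)
qed

lemma occ_diff:
  fixes P :: "'s::finite \<Rightarrow> 'a::finite \<Rightarrow> 's \<Rightarrow> real"
  assumes "\<forall>s a s'. 0 \<le> P s a s'" "\<forall>s. 0 \<le> \<rho> s"
    "\<forall>s a. (\<Sum>s'\<in>UNIV. P s a s') = 1" "(\<Sum>s\<in>UNIV. \<rho> s) = 1" "\<pi> \<in> policies" "\<pi>' \<in> policies"
    and d: "\<forall>s a. \<bar>\<pi> s a - \<pi>' s a\<bar> \<le> \<delta>"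
    and g: "0 \<le> \<gamma>" "\<gamma> < 1"
  shows "\<bar>occ \<gamma> P \<rho> \<pi> sa - occ \<gamma> P \<rho> \<pi>' sa\<bar>
     \<le> ((CARD('a) + 1) * (\<Sum>t. real (Suc t) * \<gamma> ^ t)) * \<delta>"
proof -
  obtain s a where sa: "sa = (s, a)" by fastforce
  define f where "f = (\<lambda>t. \<gamma> ^ t * (state_dist P \<rho> \<pi> t s * \<pi> s a))"
  define h where "h = (\<lambda>t. \<gamma> ^ t * (state_dist P \<rho> \<pi>' t s * \<pi>' s a))"
  define k where "k t = real (Suc t) * \<gamma> ^ t * ((CARD('a) + 1) * \<delta>)" for t
  have dnn: "0 \<le> \<delta>" using d by (meson abs_ge_zero order_trans)
  have geo: "summable (\<lambda>t. \<gamma> ^ t)" using g by (simp add: summable_geometric)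
  have fs: "summable f"
  proof (rule summable_comparison_test[OF _ geo])
    show "\<exists>N. \<forall>n\<ge>N. norm (f n) \<le> \<gamma> ^ n"
    proof (intro exI allI impI)
      fix n
      have "0 \<le> state_dist P \<rho> \<pi> n s" "state_dist P \<rho> \<pi> n s \<le> 1" "0 \<le> \<pi> s a" "\<pi> s a \<le> 1"
        using sd_nonneg[OF assms(1,2,5)] sd_le1[OF assms(1-5)] pol_le1[OF assms(5)] assms(5) by (auto simp: policies_def)
      then have "state_dist P \<rho> \<pi> n s * \<pi> s a \<le> 1" by (simp add: mult_le_one)
      then show "norm (f n) \<le> \<gamma> ^ n" using g \<open>0 \<le> state_dist P \<rho> \<pi> n s\<close> \<open>0 \<le> \<pi> s a\<close>
        by (simp add: f_def abs_mult mult_left_le)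
    qed
  qed
  have hs: "summable h"
  proof (rule summable_comparison_test[OF _ geo])
    show "\<exists>N. \<forall>n\<ge>N. norm (h n) \<le> \<gamma> ^ n"
    proof (intro exI allI impI)
      fix n
      have "0 \<le> state_dist P \<rho> \<pi>' n s" "state_dist P \<rho> \<pi>' n s \<le> 1" "0 \<le> \<pi>' s a" "\<pi>' s a \<le> 1"
        using sd_nonneg[OF assms(1,2,6)] sd_le1[OF assms(1-4,6)] pol_le1[OF assms(6)] assms(6) by (auto simp: policies_def)
      then have "state_dist P \<rho> \<pi>' n s * \<pi>' s a \<le> 1" by (simp add: mult_le_one)
      then show "norm (h n) \<le> \<gamma> ^ n" using g \<open>0 \<le> state_dist P \<rho> \<pi>' n s\<close> \<open>0 \<le> \<pi>' s a\<close>
        by (simp add: h_def abs_mult mult_left_le)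
    qed
  qed
  have ks: "summable k" unfolding k_def
    by (intro summable_mult2 K_summable g)
  have bound: "\<bar>f t - h t\<bar> \<le> k t" for t
  proof -
    define d1 where "d1 = state_dist P \<rho> \<pi> t s"
    define d2 where "d2 = state_dist P \<rho> \<pi>' t s"
    have d2: "0 \<le> d2" "d2 \<le> 1" unfolding d2_def using sd_nonneg[OF assms(1,2,6)] sd_le1[OF assms(1-4,6)] by auto
    have p: "0 \<le> \<pi> s a" "\<pi> s a \<le> 1" using assms(5) pol_le1 by (auto simp: policies_def)
    have e1: "\<bar>d1 - d2\<bar> \<le> (\<Sum>s\<in>UNIV. \<bar>state_dist P \<rho> \<pi> t s - state_dist P \<rho> \<pi>' t s\<bar>)"
      unfolding d1_def d2_def by (rule member_le_sum) auto
    also have "\<dots> \<le> real t * CARD('a) * \<delta>" by (rule e_bound[OF assms(1-7)])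
    finally have e: "\<bar>d1 - d2\<bar> \<le> real t * CARD('a) * \<delta>" .
    have "d1 * \<pi> s a - d2 * \<pi>' s a = (d1 - d2) * \<pi> s a + d2 * (\<pi> s a - \<pi>' s a)"
      by (simp add: algebra_simps)
    then have "\<bar>d1 * \<pi> s a - d2 * \<pi>' s a\<bar> \<le> \<bar>(d1 - d2) * \<pi> s a\<bar> + \<bar>d2 * (\<pi> s a - \<pi>' s a)\<bar>"
      by (metis abs_triangle_ineq)
    also have "\<dots> = \<bar>d1 - d2\<bar> * \<pi> s a + d2 * \<bar>\<pi> s a - \<pi>' s a\<bar>"
      using p d2 by (simp add: abs_mult)
    also have "\<dots> \<le> \<bar>d1 - d2\<bar> * 1 + 1 * \<delta>"
    proof (rule add_mono)
      show "\<bar>d1 - d2\<bar> * \<pi> s a \<le> \<bar>d1 - d2\<bar> * 1" using p by (intro mult_left_mono) auto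
      show "d2 * \<bar>\<pi> s a - \<pi>' s a\<bar> \<le> 1 * \<delta>" using d2 d dnn by (intro mult_mono) auto
    qed
    also have "\<dots> \<le> real t * CARD('a) * \<delta> + \<delta>" using e by simp
    also have "\<dots> \<le> real (Suc t) * ((CARD('a) + 1) * \<delta>)"
      using dnn by (simp add: algebra_simps mult_right_mono)
    finally have "\<bar>d1 * \<pi> s a - d2 * \<pi>' s a\<bar> \<le> real (Suc t) * ((CARD('a) + 1) * \<delta>)" .
    then have "\<gamma> ^ t * \<bar>d1 * \<pi> s a - d2 * \<pi>' s a\<bar> \<le> \<gamma> ^ t * (real (Suc t) * ((CARD('a) + 1) * \<delta>))"
      using g by (simp add: mult_left_mono)
    moreover have "f t - h t = \<gamma> ^ t * (d1 * \<pi> s a - d2 * \<pi>' s a)"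
      unfolding f_def h_def d1_def d2_def by (simp add: algebra_simps)
    ultimately show ?thesis
      using g by (simp add: abs_mult k_def mult_ac)
  qed
  have occ_eq: "occ \<gamma> P \<rho> \<pi> sa - occ \<gamma> P \<rho> \<pi>' sa = (\<Sum>t. f t - h t)"
    using suminf_diff[OF fs hs] unfolding occ_def sa f_def h_def by simp
  have "(\<Sum>t. f t - h t) \<le> suminf k"
    by (rule suminf_le) (use bound summable_diff[OF fs hs] ks in \<open>auto simp: abs_le_iff\<close>)
  moreover have "- suminf k \<le> (\<Sum>t. f t - h t)"
  proof -
    have "(\<Sum>t. - k t) \<le> (\<Sum>t. f t - h t)"
      by (rule suminf_le) (use bound summable_diff[OF fs hs] summable_minus[OF ks] in \<open>auto simp: abs_le_iff, smt (verit)\<close>)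
    then show ?thesis using suminf_minus[OF ks] by simp
  qed
  moreover have "suminf k = ((CARD('a) + 1) * (\<Sum>t. real (Suc t) * \<gamma> ^ t)) * \<delta>"
    unfolding k_def using suminf_mult2[OF K_summable[OF g], of "(CARD('a) + 1) * \<delta>"]
    by (simp add: algebra_simps)
  ultimately show ?thesis using occ_eq by (simp add: abs_le_iff)
qed


lemma mismatch_lip:
  fixes P :: "'s::finite \<Rightarrow> 'a::finite \<Rightarrow> 's \<Rightarrow> real" and \<Phi> :: "'s \<times> 'a \<Rightarrow> 'c::finite \<Rightarrow> real"
  assumes "\<forall>s a s'. 0 \<le> P s a s'" "\<forall>s. 0 \<le> \<rho> s"
    "\<forall>s a. (\<Sum>s'\<in>UNIV. P s a s') = 1" "(\<Sum>s\<in>UNIV. \<rho> s) = 1" "\<pi> \<in> policies" "\<pi>' \<in> policies"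
    and d: "\<forall>s a. \<bar>\<pi> s a - \<pi>' s a\<bar> \<le> \<delta>"
    and g: "0 \<le> \<gamma>" "\<gamma> < 1"
    and Phi: "\<forall>sa k. \<bar>\<Phi> sa k\<bar> \<le> 1"
  shows "mismatch \<Phi> \<gamma> P \<rho> \<pi>E \<pi> \<le> mismatch \<Phi> \<gamma> P \<rho> \<pi>E \<pi>'
     + (CARD('c) * CARD('s \<times> 'a) * ((CARD('a) + 1) * (\<Sum>t. real (Suc t) * \<gamma> ^ t))) * \<delta>"
proof -
  define C where "C = ((CARD('a) + 1) * (\<Sum>t. real (Suc t) * \<gamma> ^ t)) * \<delta>"
  have oc: "\<bar>occ \<gamma> P \<rho> \<pi> sa - occ \<gamma> P \<rho> \<pi>' sa\<bar> \<le> C" for sa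
    unfolding C_def by (rule occ_diff[OF assms(1-9)])
  have step: "\<bar>(\<Sum>sa\<in>UNIV. \<Phi> sa k * occ \<gamma> P \<rho> \<pi> sa) - (\<Sum>sa\<in>UNIV. \<Phi> sa k * occ \<gamma> P \<rho> \<pi>E sa)\<bar>
      \<le> \<bar>(\<Sum>sa\<in>UNIV. \<Phi> sa k * occ \<gamma> P \<rho> \<pi>' sa) - (\<Sum>sa\<in>UNIV. \<Phi> sa k * occ \<gamma> P \<rho> \<pi>E sa)\<bar>
        + CARD('s \<times> 'a) * C" for k
  proof -
    have "\<bar>(\<Sum>sa\<in>UNIV. \<Phi> sa k * occ \<gamma> P \<rho> \<pi> sa) - (\<Sum>sa\<in>UNIV. \<Phi> sa k * occ \<gamma> P \<rho> \<pi>' sa)\<bar>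
        = \<bar>\<Sum>sa\<in>UNIV. \<Phi> sa k * (occ \<gamma> P \<rho> \<pi> sa - occ \<gamma> P \<rho> \<pi>' sa)\<bar>"
      by (simp add: sum_subtractf[symmetric] right_diff_distrib)
    also have "\<dots> \<le> (\<Sum>sa\<in>UNIV. \<bar>\<Phi> sa k * (occ \<gamma> P \<rho> \<pi> sa - occ \<gamma> P \<rho> \<pi>' sa)\<bar>)"
      by (rule sum_abs)
    also have "\<dots> \<le> (\<Sum>sa\<in>(UNIV::('s \<times> 'a) set). C)"
    proof (rule sum_mono)
      fix sa
      have "\<bar>\<Phi> sa k\<bar> * \<bar>occ \<gamma> P \<rho> \<pi> sa - occ \<gamma> P \<rho> \<pi>' sa\<bar> \<le> 1 * C"
        using Phi oc[of sa] by (intro mult_mono) (auto simp del: split_paired_All)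
      then show "\<bar>\<Phi> sa k * (occ \<gamma> P \<rho> \<pi> sa - occ \<gamma> P \<rho> \<pi>' sa)\<bar> \<le> C"
        by (simp add: abs_mult)
    qed
    also have "\<dots> = CARD('s \<times> 'a) * C" by simp
    finally show ?thesis by linarith
  qed
  have "mismatch \<Phi> \<gamma> P \<rho> \<pi>E \<pi> \<le> (\<Sum>k\<in>UNIV.
      \<bar>(\<Sum>sa\<in>UNIV. \<Phi> sa k * occ \<gamma> P \<rho> \<pi>' sa) - (\<Sum>sa\<in>UNIV. \<Phi> sa k * occ \<gamma> P \<rho> \<pi>E sa)\<bar>
        + CARD('s \<times> 'a) * C)"
    unfolding mismatch_def by (rule sum_mono) (rule step)
  also have "\<dots> = mismatch \<Phi> \<gamma> P \<rho> \<pi>E \<pi>' + CARD('c) * (CARD('s \<times> 'a) * C)"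
    unfolding mismatch_def by (simp add: sum.distrib)
  finally show ?thesis unfolding C_def by (simp add: mult_ac)
qed

lemma V_unif:
  "V N (\<lambda>_. 1 / real N) \<Phi> \<gamma> P \<rho> \<pi>E \<pi> = (\<Sum>i=1..N. mismatch \<Phi> \<gamma> (P i) \<rho> (\<pi>E i) \<pi>) / real N"
  unfolding V_def by (simp add: sum_divide_distrib)

theorem proposition3:
  fixes N :: nat and \<gamma> :: real
    and \<rho> :: "'s::finite \<Rightarrow> real"
    and P :: "nat \<Rightarrow> 's \<Rightarrow> 'a::finite \<Rightarrow> 's \<Rightarrow> real"
    and \<pi>E :: "nat \<Rightarrow> 's \<Rightarrow> 'a \<Rightarrow> real"
    and \<Phi> :: "'s \<times> 'a \<Rightarrow> 'c::finite \<Rightarrow> real"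
    and \<pi>cen :: "'s \<Rightarrow> 'a \<Rightarrow> real"
  assumes N: "N \<ge> 1"
    and gamma: "0 < \<gamma>" "\<gamma> < 1"
    and rho: "\<forall>s. 0 \<le> \<rho> s" "(\<Sum>s\<in>UNIV. \<rho> s) = 1"
    and P: "\<forall>i\<in>{1..N}. \<forall>s a s'. 0 \<le> P i s a s'"
           "\<forall>i\<in>{1..N}. \<forall>s a. (\<Sum>s'\<in>UNIV. P i s a s') = 1"
    and expert: "\<forall>i\<in>{1..N}. \<pi>E i \<in> policies"
    and Phi: "\<forall>sa k. \<bar>\<Phi> sa k\<bar> \<le> 1"
    and cen: "\<pi>cen \<in> S_cen N \<Phi> \<gamma> P \<rho> \<pi>E"
  shows
    "(\<forall>\<epsilon>\<ge>0. \<forall>\<pi>s \<pi>c. CAL_optimizer N \<Phi> \<gamma> P \<rho> \<pi>E \<epsilon> \<pi>s \<pi>c \<longrightarrow>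
        (\<forall>i\<in>{1..N}. V N (\<lambda>_. 1 / real N) \<Phi> \<gamma> P \<rho> \<pi>E \<pi>cen
                   \<le> V N (\<lambda>_. 1 / real N) \<Phi> \<gamma> P \<rho> \<pi>E (\<pi>s i)))
     \<and>
     (\<forall>j\<in>{1..N}. \<forall>\<pi>dec \<in> S_dec \<Phi> \<gamma> P \<rho> \<pi>E j.
        V N (\<lambda>_. 1 / real N) \<Phi> \<gamma> P \<rho> \<pi>E \<pi>cen < V N (\<lambda>_. 1 / real N) \<Phi> \<gamma> P \<rho> \<pi>E \<pi>dec \<longrightarrow>
        (\<exists>\<epsilon>>0. \<forall>\<pi>s \<pi>c. CAL_optimizer N \<Phi> \<gamma> P \<rho> \<pi>E \<epsilon> \<pi>s \<pi>c \<longrightarrow>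
            V N (\<lambda>_. 1 / real N) \<Phi> \<gamma> P \<rho> \<pi>E (\<pi>s j)
              \<le> V N (\<lambda>_. 1 / real N) \<Phi> \<gamma> P \<rho> \<pi>E \<pi>dec))"
proof -
  define L :: real where "L = CARD('c) * CARD('s \<times> 'a) * ((CARD('a) + 1) * (\<Sum>t. real (Suc t) * \<gamma> ^ t))"
  have g0: "0 \<le> \<gamma>" "\<gamma> < 1" using gamma by auto
  have L0: "0 \<le> L"
  proof -
    have "0 \<le> (\<Sum>t. real (Suc t) * \<gamma> ^ t)"
      by (rule suminf_nonneg[OF K_summable[OF g0]]) (use g0 in simp)
    then show ?thesis unfolding L_def by simp
  qed
  have Npos: "0 < real N" using N by simp
  have cenpol: "\<pi>cen \<in> policies"
    and cenmin: "\<And>\<pi>'. \<pi>' \<in> policies \<Longrightarrow> (\<Sum>i=1..N. mismatch \<Phi> \<gamma> (P i) \<rho> (\<pi>E i) \<pi>cen)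
        \<le> (\<Sum>i=1..N. mismatch \<Phi> \<gamma> (P i) \<rho> (\<pi>E i) \<pi>')"
    using cen unfolding S_cen_def by auto
  have A: "\<forall>\<epsilon>\<ge>0. \<forall>\<pi>s \<pi>c. CAL_optimizer N \<Phi> \<gamma> P \<rho> \<pi>E \<epsilon> \<pi>s \<pi>c \<longrightarrow>
        (\<forall>i\<in>{1..N}. V N (\<lambda>_. 1 / real N) \<Phi> \<gamma> P \<rho> \<pi>E \<pi>cen
                   \<le> V N (\<lambda>_. 1 / real N) \<Phi> \<gamma> P \<rho> \<pi>E (\<pi>s i))"
  proof (intro allI impI ballI)
    fix \<epsilon> :: real and \<pi>s \<pi>c i
    assume "CAL_optimizer N \<Phi> \<gamma> P \<rho> \<pi>E \<epsilon> \<pi>s \<pi>c" "i \<in> {1..N}"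
    then have "\<pi>s i \<in> policies" by (simp add: CAL_optimizer_def CAL_feasible_def)
    then show "V N (\<lambda>_. 1 / real N) \<Phi> \<gamma> P \<rho> \<pi>E \<pi>cen \<le> V N (\<lambda>_. 1 / real N) \<Phi> \<gamma> P \<rho> \<pi>E (\<pi>s i)"
      using cenmin Npos by (simp add: V_unif divide_right_mono)
  qed
  have B: "\<forall>j\<in>{1..N}. \<forall>\<pi>dec \<in> S_dec \<Phi> \<gamma> P \<rho> \<pi>E j.
        V N (\<lambda>_. 1 / real N) \<Phi> \<gamma> P \<rho> \<pi>E \<pi>cen < V N (\<lambda>_. 1 / real N) \<Phi> \<gamma> P \<rho> \<pi>E \<pi>dec \<longrightarrow>
        (\<exists>\<epsilon>>0. \<forall>\<pi>s \<pi>c. CAL_optimizer N \<Phi> \<gamma> P \<rho> \<pi>E \<epsilon> \<pi>s \<pi>c \<longrightarrow>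
            V N (\<lambda>_. 1 / real N) \<Phi> \<gamma> P \<rho> \<pi>E (\<pi>s j)
              \<le> V N (\<lambda>_. 1 / real N) \<Phi> \<gamma> P \<rho> \<pi>E \<pi>dec)"
  proof (intro ballI impI)
    fix j \<pi>dec
    assume j: "j \<in> {1..N}" and lt: "V N (\<lambda>_. 1 / real N) \<Phi> \<gamma> P \<rho> \<pi>E \<pi>cen < V N (\<lambda>_. 1 / real N) \<Phi> \<gamma> P \<rho> \<pi>E \<pi>dec"
    define gap where "gap = V N (\<lambda>_. 1 / real N) \<Phi> \<gamma> P \<rho> \<pi>E \<pi>dec - V N (\<lambda>_. 1 / real N) \<Phi> \<gamma> P \<rho> \<pi>E \<pi>cen"
    have gap: "0 < gap" using lt unfolding gap_def by simp
    define \<epsilon> where "\<epsilon> = gap / (2 * L + 1)"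
    have epos: "0 < \<epsilon>" unfolding \<epsilon>_def using gap L0 by simp
    have Le: "L * (2 * \<epsilon>) \<le> gap"
    proof -
      have "L * (2 * \<epsilon>) = gap * (2 * L) / (2 * L + 1)" unfolding \<epsilon>_def by (simp add: field_simps)
      also have "\<dots> \<le> gap" using gap L0 by (simp add: field_simps)
      finally show ?thesis .
    qed
    show "\<exists>\<epsilon>>0. \<forall>\<pi>s \<pi>c. CAL_optimizer N \<Phi> \<gamma> P \<rho> \<pi>E \<epsilon> \<pi>s \<pi>c \<longrightarrow>
            V N (\<lambda>_. 1 / real N) \<Phi> \<gamma> P \<rho> \<pi>E (\<pi>s j)
              \<le> V N (\<lambda>_. 1 / real N) \<Phi> \<gamma> P \<rho> \<pi>E \<pi>dec"
    proof (intro exI[of _ \<epsilon>] conjI allI impI)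
      show "0 < \<epsilon>" by (rule epos)
      fix \<pi>s \<pi>c assume opt: "CAL_optimizer N \<Phi> \<gamma> P \<rho> \<pi>E \<epsilon> \<pi>s \<pi>c"
      have feas: "CAL_feasible N \<epsilon> \<pi>s \<pi>c" using opt by (simp add: CAL_optimizer_def)
      have feas2: "CAL_feasible N \<epsilon> (\<lambda>_. \<pi>cen) \<pi>cen"
        unfolding CAL_feasible_def using cenpol epos by simp
      have sumle: "(\<Sum>i=1..N. mismatch \<Phi> \<gamma> (P i) \<rho> (\<pi>E i) (\<pi>s i))
          \<le> (\<Sum>i=1..N. mismatch \<Phi> \<gamma> (P i) \<rho> (\<pi>E i) \<pi>cen)"
        using opt feas2 unfolding CAL_optimizer_def CAL_objective_def by blast
      have pols: "\<And>i. i \<in> {1..N} \<Longrightarrow> \<pi>s i \<in> policies" and cl: "\<And>i s a. i \<in> {1..N} \<Longrightarrow> \<bar>\<pi>s i s a - \<pi>c s a\<bar> \<le> \<epsilon>"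
        using feas unfolding CAL_feasible_def by auto
      have each: "mismatch \<Phi> \<gamma> (P i) \<rho> (\<pi>E i) (\<pi>s j) \<le> mismatch \<Phi> \<gamma> (P i) \<rho> (\<pi>E i) (\<pi>s i) + L * (2 * \<epsilon>)"
        if i: "i \<in> {1..N}" for i
      proof -
        have d: "\<forall>s a. \<bar>\<pi>s j s a - \<pi>s i s a\<bar> \<le> 2 * \<epsilon>"
        proof (intro allI)
          fix s a
          show "\<bar>\<pi>s j s a - \<pi>s i s a\<bar> \<le> 2 * \<epsilon>" using cl[OF j, of s a] cl[OF i, of s a] by linarith
        qed
        have "mismatch \<Phi> \<gamma> (P i) \<rho> (\<pi>E i) (\<pi>s j) \<le> mismatch \<Phi> \<gamma> (P i) \<rho> (\<pi>E i) (\<pi>s i)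
           + (CARD('c) * CARD('s \<times> 'a) * ((CARD('a) + 1) * (\<Sum>t. real (Suc t) * \<gamma> ^ t))) * (2 * \<epsilon>)"
          by (rule mismatch_lip) (use P(1) P(2) rho i pols[OF i] pols[OF j] d g0 Phi in auto)
        then show ?thesis unfolding L_def by simp
      qed
      have "(\<Sum>i=1..N. mismatch \<Phi> \<gamma> (P i) \<rho> (\<pi>E i) (\<pi>s j))
          \<le> (\<Sum>i=1..N. mismatch \<Phi> \<gamma> (P i) \<rho> (\<pi>E i) (\<pi>s i) + L * (2 * \<epsilon>))"
        by (rule sum_mono) (rule each)
      also have "\<dots> = (\<Sum>i=1..N. mismatch \<Phi> \<gamma> (P i) \<rho> (\<pi>E i) (\<pi>s i)) + real N * (L * (2 * \<epsilon>))"
        by (simp add: sum.distrib)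
      also have "\<dots> \<le> (\<Sum>i=1..N. mismatch \<Phi> \<gamma> (P i) \<rho> (\<pi>E i) \<pi>cen) + real N * gap"
        using sumle Le Npos by (smt (verit) mult_left_mono)
      finally have "(\<Sum>i=1..N. mismatch \<Phi> \<gamma> (P i) \<rho> (\<pi>E i) (\<pi>s j)) / real N
          \<le> ((\<Sum>i=1..N. mismatch \<Phi> \<gamma> (P i) \<rho> (\<pi>E i) \<pi>cen) + real N * gap) / real N"
        using Npos by (simp add: divide_right_mono)
      also have "\<dots> = V N (\<lambda>_. 1 / real N) \<Phi> \<gamma> P \<rho> \<pi>E \<pi>cen + gap"
        using Npos by (simp add: V_unif add_divide_distrib)
      finally show "V N (\<lambda>_. 1 / real N) \<Phi> \<gamma> P \<rho> \<pi>E (\<pi>s j) \<le> V N (\<lambda>_. 1 / real N) \<Phi> \<gamma> P \<rho> \<pi>E \<pi>dec"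
        unfolding gap_def by (simp add: V_unif)
    qed
  qed
  show ?thesis using A B by blast
qed

end
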